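(* Let $m,n\geq1$ and let $\lambda,\mu\in\Lambda_m^n$ be two distinct weights with $|\lambda|\leq|\mu|$. Then: (1) there is no path of length $2$ in $\Gamma_m^n$ between $e_\lambda$ and $e_\mu$ passing through a vertex $e_\nu$ with $|\nu|=|\lambda|$ or $|\nu|=|\mu|$; (2) the set of length-$2$ paths between $e_\lambda$ and $e_\mu$ passing through vertices $e_\nu$ with $|\nu|<|\lambda|$ contains at most one element; (3) the set of length-$2$ paths between $e_\lambda$ and $e_\mu$ passing through vertices $e_\nu$ with $|\nu|>|\mu|$ contains at most one element.
   Context: A weight of type $(m,n)$ is a word $\lambda=\lambda_1\cdots\lambda_{m+n}$ in $\vee$ ("down") and $\wedge$ ("up") with $m$ letters $\vee$ and $n$ letters $\wedge$; $\Lambda_m^n$ is the set of weights. The height of $\lambda$ is $|\lambda|=\sum_{i:\lambda_i=\vee}\#\{j<i:\lambda_j=\wedge\}$. For $\lambda\in\Lambda_m^n$ the cups of $\underline\lambda$ are obtained by repeatedly pairing a $\vee$ with a $\wedge$ that are neighbours ($\vee$ on the left), ignoring positions already paired (drawn as nested non-crossing lower semicircles on a horizontal line); mirroring each cup above the line gives the closed circles of the degree-zero arc diagram $e_\lambda$. $\Gamma_m^n$ is the simple undirected graph with vertex set $\{e_\lambda\}_{\lambda\in\Lambda_m^n}$ and an edge between $e_\lambda$ and $e_\mu$ if one of $\lambda,\mu$ is obtained from the other by exchanging the labels at the two endpoints of one cup (i.e. of a $\vee\cdots\wedge$ pair on a single circle of $e_\lambda$, resp. $e_\mu$). A path of length $2$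 between $e_\lambda$ and $e_\mu$ through $e_\nu$ means $e_\nu$ is adjacent to both. *)

theory Defs
  imports Main
begin

text \<open>A weight is a word in down (True) and up (False); positions are 0-based.\<close>
type_synonym weight = "bool list"

definition weights :: "nat \<Rightarrow> nat \<Rightarrow> weight set" where
  "weights m n = {w. length w = m + n \<and> length (filter id w) = m}"

definition height :: "weight \<Rightarrow> nat" where
  "height w = (\<Sum>i\<in>{i. i < length w \<and> w ! i}. card {j. j < i \<and> \<not> w ! j})"

definition paired :: "(nat \<times> nat) set \<Rightarrow> nat \<Rightarrow> bool" where
  "paired P k \<longleftrightarrow> (\<exists>a b. (a, b) \<in> P \<and> (k = a \<or> k = b))"

definition cup_step :: "weight \<Rightarrow> (nat \<times> nat) set \<Rightarrow> (nat \<times> nat) set \<Rightarrow> bool" where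
  "cup_step w P Q \<longleftrightarrow> (\<exists>i j. i < j \<and> j < length w \<and> w ! i \<and> \<not> w ! j \<and>
       \<not> paired P i \<and> \<not> paired P j \<and> (\<forall>k. i < k \<and> k < j \<longrightarrow> paired P k) \<and>
       Q = insert (i, j) P)"

definition cup :: "weight \<Rightarrow> nat \<Rightarrow> nat \<Rightarrow> bool" where
  "cup w i j \<longleftrightarrow> (\<exists>P. (cup_step w)\<^sup>*\<^sup>* {} P \<and> \<not> (\<exists>Q. cup_step w P Q) \<and> (i, j) \<in> P)"

definition swap_at :: "weight \<Rightarrow> nat \<Rightarrow> nat \<Rightarrow> weight" where
  "swap_at w i j = w[i := w ! j, j := w ! i]"

text \<open>Edge relation of Gamma (vertices e_w identified with weights w).\<close>
definition adj :: "weight \<Rightarrow> weight \<Rightarrow> bool" where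
  "adj w v \<longleftrightarrow> (\<exists>i j. cup w i j \<and> v = swap_at w i j) \<or> (\<exists>i j. cup v i j \<and> w = swap_at v i j)"

end

theory Submission
  imports Defs
begin


definition fw :: "weight \<Rightarrow> nat \<Rightarrow> int" where
  "fw w k = int (length (filter id (take k w))) - int (length (filter Not (take k w)))"

lemma fw_Suc: "k < length w \<Longrightarrow> fw w (Suc k) = fw w k + (if w ! k then 1 else -1)"
  by (simp add: fw_def take_Suc_conv_app_nth)

definition matched :: "weight \<Rightarrow> nat \<Rightarrow> nat \<Rightarrow> bool" where
  "matched w i j \<longleftrightarrow> i < j \<and> j < length w \<and> w ! i \<and> fw w (Suc j) = fw w i
     \<and> (\<forall>k. i < k \<and> k \<le> j \<longrightarrow> fw w k > fw w i)"

lemma matched_nd: "matched w i j \<Longrightarrow> \<not> w ! j"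
proof
  assume m: "matched w i j" and "w ! j"
  then have "fw w (Suc j) = fw w j + 1" using fw_Suc[of j w] unfolding matched_def by simp
  moreover have "fw w j > fw w i" using m unfolding matched_def by auto
  ultimately show False using m unfolding matched_def by auto
qed

lemma matched_inj1: "matched w i j \<Longrightarrow> matched w i j' \<Longrightarrow> j = j'"
proof (rule ccontr)
  assume m: "matched w i j" "matched w i j'" and ne: "j \<noteq> j'"
  show False
  proof (cases "j < j'")
    case True
    then show ?thesis using m unfolding matched_def by (metis Suc_leI less_Suc_eq order_less_irrefl)
  next
    case False
    then have "j' < j" using ne by auto
    then show ?thesis using m unfolding matched_def by (metis Suc_leI less_Suc_eq order_less_irrefl)
  qed
qed

lemma matched_inj2: "matched w i j \<Longrightarrow> matched w i' j \<Longrightarrow> i = i'"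
  unfolding matched_def by (metis linorder_neqE_nat order_less_irrefl order_less_imp_le)

lemma matched_nocross: "matched w a b \<Longrightarrow> matched w c d \<Longrightarrow> a < c \<Longrightarrow> c < b \<Longrightarrow> b < d \<Longrightarrow> False"
proof -
  assume m1: "matched w a b" and m2: "matched w c d" and o: "a < c" "c < b" "b < d"
  have "fw w (Suc b) > fw w c" using m2 o unfolding matched_def by auto
  moreover have "fw w c > fw w a" using m1 o unfolding matched_def by auto
  ultimately show False using m1 unfolding matched_def by auto
qed

definition inv :: "weight \<Rightarrow> (nat \<times> nat) set \<Rightarrow> bool" where
  "inv w P \<longleftrightarrow> (\<forall>a b. (a,b)\<in>P \<longrightarrow> matched w a b \<and> (\<forall>k. a<k \<and> k<b \<longrightarrow> paired P k))
     \<and> (\<forall>a b c d. (a,b)\<in>P \<longrightarrow> (c,d)\<in>P \<longrightarrow> \<not>(a<c \<and> c<b \<and> b<d))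
     \<and> (\<forall>a b c. (a,b)\<in>P \<longrightarrow> (c,b)\<in>P \<longrightarrow> a=c)"

lemma key:
  assumes I: "inv w P" and ij: "i < j" "j < length w" "w ! i" "\<not> w ! j"
    and ui: "\<not> paired P i" and uj: "\<not> paired P j"
    and ins: "\<forall>k. i < k \<and> k < j \<longrightarrow> paired P k"
  shows "matched w i j"
proof -
  have M: "\<And>a b. (a,b)\<in>P \<Longrightarrow> matched w a b" using I unfolding inv_def by blast
  have IP: "\<And>a b k. (a,b)\<in>P \<Longrightarrow> a<k \<Longrightarrow> k<b \<Longrightarrow> paired P k" using I unfolding inv_def by blast
  have NC: "\<And>a b c d. (a,b)\<in>P \<Longrightarrow> (c,d)\<in>P \<Longrightarrow> a<c \<Longrightarrow> c<b \<Longrightarrow> b<d \<Longrightarrow> False"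
    using I unfolding inv_def by blast
  have I4: "\<And>a b c. (a,b)\<in>P \<Longrightarrow> (c,b)\<in>P \<Longrightarrow> a=c" using I unfolding inv_def by blast
  have pI: "\<And>a b. (a,b)\<in>P \<Longrightarrow> paired P a \<and> paired P b" unfolding paired_def by blast
  have F1: "\<And>a b. (a,b)\<in>P \<Longrightarrow> a<i \<Longrightarrow> i<b \<Longrightarrow> False" using IP ui by blast
  have F2: "\<And>a b. (a,b)\<in>P \<Longrightarrow> a<j \<Longrightarrow> j<b \<Longrightarrow> False" using IP uj by blast
  define cov where "cov k \<longleftrightarrow> (\<exists>a b. (a,b)\<in>P \<and> a<k \<and> k\<le>b)" for k
  have C: "i < k \<Longrightarrow> k \<le> j \<Longrightarrow> fw w k \<ge> fw w (Suc i) \<and> (\<not> cov k \<longrightarrow> fw w k = fw w (Suc i))" for k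
  proof (induction k rule: less_induct)
    case (less k)
    show ?case
    proof (cases "cov k")
      case True
      then obtain a b where ab: "(a,b)\<in>P" "a<k" "k\<le>b" unfolding cov_def by blast
      have "a \<noteq> i" using ab pI ui by blast
      moreover have "\<not> a < i"
      proof
        assume "a < i"
        moreover have "i \<noteq> b" using ab pI ui by blast
        ultimately show False using F1[OF ab(1)] ab less.prems by linarith
      qed
      ultimately have ai: "i < a" by linarith
      have "fw w a \<ge> fw w (Suc i)" using less.IH[of a] ai ab less.prems by auto
      moreover have "fw w k > fw w a" using M[OF ab(1)] ab unfolding matched_def by auto
      ultimately show ?thesis using True by auto
    next
      case False
      show ?thesis
      proof (cases "k = Suc i")
        case True then show ?thesis by simp
      next
        case ki: False
        then have "i < k - 1 \<and> k - 1 < j" using less.prems by auto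
        then have "paired P (k - 1)" using ins by blast
        then obtain a b where ab: "(a,b)\<in>P" "k - 1 = a \<or> k - 1 = b" unfolding paired_def by blast
        have abm: "matched w a b" using M[OF ab(1)] .
        have "k - 1 \<noteq> a"
        proof
          assume "k - 1 = a"
          then have "cov k" unfolding cov_def using ab abm less.prems unfolding matched_def
            by (intro exI[of _ a] exI[of _ b]) auto
          then show False using False by simp
        qed
        then have kb: "k - 1 = b" using ab by auto
        have "a \<noteq> i" using ab pI ui by blast
        moreover have "\<not> a < i"
        proof
          assume ai0: "a < i"
          have ib0: "i < b" using kb ki less.prems by linarith
          show False by (rule F1[OF ab(1) ai0 ib0])
        qed
        ultimately have ai: "i < a" by linarith
        have ak: "a < k" using abm kb unfolding matched_def by auto
        have "\<not> cov a"
        proof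
          assume "cov a"
          then obtain a' b' where ab': "(a',b')\<in>P" "a'<a" "a\<le>b'" unfolding cov_def by blast
          have "a \<noteq> b'" using matched_nd[OF M[OF ab'(1)]] abm unfolding matched_def by auto
          then have "a < b'" using ab' by auto
          moreover have "\<not> b' < b" using NC[OF ab'(1) ab(1)] ab' \<open>a < b'\<close> by auto
          moreover have "b' \<noteq> b"
          proof
            assume "b' = b"
            then have "a' = a" using I4[OF ab'(1)] ab(1) by simp
            then show False using ab'(2) by simp
          qed
          ultimately have bb: "b < b'" by linarith
          have "a' < k" using ab'(2) ak by linarith
          moreover have "k \<le> b'" using bb kb less.prems by linarith
          ultimately have "cov k" unfolding cov_def using ab'(1) by blast
          then show False using False by simp
        qed
        then have "fw w a = fw w (Suc i)" using less.IH[of a] ai ak less.prems by auto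
        moreover have "fw w k = fw w a" using abm kb less.prems ak unfolding matched_def
          by (metis Suc_diff_1 gr0I not_less_zero)
        ultimately show ?thesis by auto
      qed
    qed
  qed
  have s: "fw w (Suc i) = fw w i + 1" using fw_Suc[of i w] ij by auto
  have "\<not> cov j"
  proof
    assume "cov j"
    then obtain a b where ab: "(a,b)\<in>P" "a<j" "j\<le>b" unfolding cov_def by blast
    have "j \<noteq> b" using ab pI uj by blast
    then show False using F2[OF ab(1)] ab by auto
  qed
  then have "fw w j = fw w (Suc i)" using C[of j] ij by auto
  moreover have "fw w (Suc j) = fw w j - 1" using fw_Suc[of j w] ij by auto
  ultimately have "fw w (Suc j) = fw w i" using s by auto
  moreover have "\<forall>k. i < k \<and> k \<le> j \<longrightarrow> fw w k > fw w i"
  proof (intro allI impI)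
    fix k assume kk: "i < k \<and> k \<le> j"
    have "fw w k \<ge> fw w (Suc i)" using C[of k] kk by simp
    then show "fw w k > fw w i" using s by linarith
  qed
  ultimately show ?thesis unfolding matched_def using ij by auto
qed


lemma paired_insert: "paired P k \<Longrightarrow> paired (insert x P) k"
  unfolding paired_def by blast

lemma inv_step:
  assumes I: "inv w P" and st: "cup_step w P Q"
  shows "inv w Q"
proof -
  obtain i j where ij: "i < j" "j < length w" "w ! i" "\<not> w ! j"
    and ui: "\<not> paired P i" and uj: "\<not> paired P j"
    and ins: "\<forall>k. i < k \<and> k < j \<longrightarrow> paired P k" and Q: "Q = insert (i, j) P"
    using st unfolding cup_step_def by blast
  have mij: "matched w i j" using key[OF I ij ui uj ins] .
  have M: "\<And>a b. (a,b)\<in>P \<Longrightarrow> matched w a b" using I unfolding inv_def by blast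
  have IP: "\<And>a b k. (a,b)\<in>P \<Longrightarrow> a<k \<Longrightarrow> k<b \<Longrightarrow> paired P k" using I unfolding inv_def by blast
  have NC: "\<And>a b c d. (a,b)\<in>P \<Longrightarrow> (c,d)\<in>P \<Longrightarrow> a<c \<Longrightarrow> c<b \<Longrightarrow> b<d \<Longrightarrow> False"
    using I unfolding inv_def by blast
  have I4: "\<And>a b c. (a,b)\<in>P \<Longrightarrow> (c,b)\<in>P \<Longrightarrow> a=c" using I unfolding inv_def by blast
  have pI: "\<And>a b. (a,b)\<in>P \<Longrightarrow> paired P a \<and> paired P b" unfolding paired_def by blast
  have A1: "\<forall>a b. (a,b)\<in>Q \<longrightarrow> matched w a b \<and> (\<forall>k. a<k \<and> k<b \<longrightarrow> paired Q k)"
    unfolding Q using M IP ins mij paired_insert by blast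
  have A2: "\<forall>a b c d. (a,b)\<in>Q \<longrightarrow> (c,d)\<in>Q \<longrightarrow> \<not>(a<c \<and> c<b \<and> b<d)"
  proof (intro allI impI notI)
    fix a b c d assume ab: "(a,b)\<in>Q" and cd: "(c,d)\<in>Q" and o: "a<c \<and> c<b \<and> b<d"
    show False
    proof (cases "(a,b) = (i,j)")
      case True
      then have cd': "(c,d) \<in> P" using cd o Q by auto
      then show False using IP[OF cd', of j] uj True o by auto
    next
      case False
      then have ab': "(a,b) \<in> P" using ab Q by auto
      show False
      proof (cases "(c,d) = (i,j)")
        case True
        then show False using IP[OF ab', of i] ui o by auto
      next
        case False
        then have "(c,d) \<in> P" using cd Q by auto
        then show False using NC[OF ab'] o by blast
      qed
    qed
  qed
  have A3: "\<forall>a b c. (a,b)\<in>Q \<longrightarrow> (c,b)\<in>Q \<longrightarrow> a=c"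
  proof (intro allI impI)
    fix a b c assume ab: "(a,b)\<in>Q" and cb: "(c,b)\<in>Q"
    show "a = c"
    proof (cases "b = j")
      case True
      then have "(a,b) \<notin> P" "(c,b) \<notin> P" using pI uj by blast+
      then show ?thesis using ab cb Q by auto
    next
      case False
      then have "(a,b) \<in> P" "(c,b) \<in> P" using ab cb Q by auto
      then show ?thesis using I4 by blast
    qed
  qed
  show ?thesis unfolding inv_def using A1 A2 A3 by blast
qed

lemma inv_empty: "inv w {}"
  unfolding inv_def paired_def by blast

lemma cup_matched: "cup w i j \<Longrightarrow> matched w i j"
proof -
  assume "cup w i j"
  then obtain P where r: "(cup_step w)\<^sup>*\<^sup>* {} P" and ij: "(i,j) \<in> P" unfolding cup_def by blast
  have "inv w P" using r
  proof (induction rule: rtranclp_induct)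
    case base then show ?case by (rule inv_empty)
  next
    case (step y z) then show ?case using inv_step by blast
  qed
  then show ?thesis using ij unfolding inv_def by blast
qed



definition invs :: "weight \<Rightarrow> (nat \<times> nat) set" where
  "invs w = {(q,p). q < length w \<and> w ! q \<and> p < q \<and> \<not> w ! p}"

lemma finite_invs: "finite (invs w)"
proof -
  have "invs w \<subseteq> {..<length w} \<times> {..<length w}" unfolding invs_def by auto
  then show ?thesis by (rule finite_subset) auto
qed

lemma height_invs: "height w = card (invs w)"
proof -
  have e: "invs w = Sigma {i. i < length w \<and> w ! i} (\<lambda>q. {j. j < q \<and> \<not> w ! j})"
    unfolding invs_def by auto
  show ?thesis unfolding height_def e
    by (subst card_SigmaI) auto
qed

lemma swap_nth:
  assumes "i < j" "j < length w" "p < length w"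
  shows "swap_at w i j ! p = (if p = i then w ! j else if p = j then w ! i else w ! p)"
  using assms unfolding swap_at_def by (auto simp: nth_list_update)

lemma swap_length: "length (swap_at w i j) = length w"
  unfolding swap_at_def by simp

lemma height_swap:
  assumes ij: "i < j" "j < length w" "w ! i" "\<not> w ! j"
  shows "height w < height (swap_at w i j)"
proof -
  let ?w = "swap_at w i j"
  have L: "length ?w = length w" by (rule swap_length)
  have N: "\<And>p. p < length w \<Longrightarrow> ?w ! p = (if p = i then False else if p = j then True else w ! p)"
    using swap_nth[OF ij(1,2)] ij by auto
  define psi where "psi x = (if fst x = i then (j, snd x) else if snd x = j then (fst x, i) else x)"
    for x :: "nat \<times> nat"
  have inj: "inj_on psi (invs w)"
  proof (rule inj_onI)
    fix x y assume x: "x \<in> invs w" and y: "y \<in> invs w" and e: "psi x = psi y"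
    obtain q p where xq: "x = (q,p)" by (cases x)
    obtain q' p' where yq: "y = (q',p')" by (cases y)
    show "x = y" using x y e ij unfolding xq yq psi_def invs_def
      by (auto split: if_splits)
  qed
  have sub: "psi ` invs w \<subseteq> invs ?w"
  proof
    fix z assume "z \<in> psi ` invs w"
    then obtain q p where qp: "(q,p) \<in> invs w" and z: "z = psi (q,p)" by auto
    have q: "q < length w" "w ! q" "p < q" "\<not> w ! p" using qp unfolding invs_def by auto
    show "z \<in> invs ?w"
      using q ij N[of q] N[of p] N[of j] N[of i] unfolding z psi_def invs_def L by auto
  qed
  have notin: "(j, i) \<notin> psi ` invs w"
  proof
    assume "(j, i) \<in> psi ` invs w"
    then obtain q p where qp: "(q,p) \<in> invs w" and z: "(j,i) = psi (q,p)" by auto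
    have q: "q < length w" "w ! q" "p < q" "\<not> w ! p" using qp unfolding invs_def by auto
    show False using z q ij unfolding psi_def by (auto split: if_splits)
  qed
  have "(j, i) \<in> invs ?w" using N[of i] N[of j] ij unfolding invs_def L by auto
  then have "psi ` invs w \<subset> invs ?w" using sub notin by blast
  then have "card (psi ` invs w) < card (invs ?w)" using finite_invs by (rule psubset_card_mono[rotated])
  moreover have "card (psi ` invs w) = card (invs w)" using card_image[OF inj] .
  ultimately show ?thesis unfolding height_invs by simp
qed



lemma comb2_abs:
  fixes L U V W :: "nat \<Rightarrow> bool"
  assumes hL: "\<And>p. L p = (if p=a then V b else if p=b then V a else V p)"
    and hU: "\<And>p. U p = (if p=c then V d else if p=d then V c else V p)"
    and hL': "\<And>p. L p = (if p=a' then W b' else if p=b' then W a' else W p)"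
    and hU': "\<And>p. U p = (if p=c' then W d' else if p=d' then W c' else W p)"
    and v: "a < b" "V a" "\<not> V b" "c < d" "V c" "\<not> V d" "(a,b) \<noteq> (c,d)"
    and v1: "a = c \<Longrightarrow> b = d" "b = d \<Longrightarrow> a = c" "\<not> (a < c \<and> c < b \<and> b < d)" "\<not> (c < a \<and> a < d \<and> d < b)"
    and w: "a' < b'" "W a'" "\<not> W b'" "c' < d'" "W c'" "\<not> W d'" "(a',b') \<noteq> (c',d')"
    and w1: "a' = c' \<Longrightarrow> b' = d'" "b' = d' \<Longrightarrow> a' = c'" "\<not> (a' < c' \<and> c' < b' \<and> b' < d')" "\<not> (c' < a' \<and> a' < d' \<and> d' < b')"
  shows "V p = W p"
proof -
  have dv: "a \<noteq> c" "b \<noteq> d" "a \<noteq> d" "b \<noteq> c" using v v1 by auto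
  have dw: "a' \<noteq> c'" "b' \<noteq> d'" "a' \<noteq> d'" "b' \<noteq> c'" using w w1 by auto
  have T1: "(L x \<and> L x \<noteq> U x) \<longleftrightarrow> (x = b \<or> x = c)" for x
    using hL[of x] hU[of x] v dv by auto
  have T2: "(\<not> L x \<and> L x \<noteq> U x) \<longleftrightarrow> (x = a \<or> x = d)" for x
    using hL[of x] hU[of x] v dv by auto
  have T1': "(L x \<and> L x \<noteq> U x) \<longleftrightarrow> (x = b' \<or> x = c')" for x
    using hL'[of x] hU'[of x] w dw by auto
  have T2': "(\<not> L x \<and> L x \<noteq> U x) \<longleftrightarrow> (x = a' \<or> x = d')" for x
    using hL'[of x] hU'[of x] w dw by auto
  have E1: "(x = b \<or> x = c) \<longleftrightarrow> (x = b' \<or> x = c')" for x using T1[of x] T1'[of x] by argo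
  have E2: "(x = a \<or> x = d) \<longleftrightarrow> (x = a' \<or> x = d')" for x using T2[of x] T2'[of x] by argo
  have S1: "(b = b' \<and> c = c') \<or> (b = c' \<and> c = b')"
    using E1[of b] E1[of c] E1[of b'] E1[of c'] dv dw by auto
  have S2: "(a = a' \<and> d = d') \<or> (a = d' \<and> d = a')"
    using E2[of a] E2[of d] E2[of a'] E2[of d'] dv dw by auto
  have "a = a' \<and> b = b'"
  proof (cases "a = a'")
    case True
    then have "d = d'" using S2 dv by auto
    then show ?thesis using S1 True v w v1 w1 by auto
  next
    case False
    then have ad: "a = d'" "d = a'" using S2 by auto
    show ?thesis
    proof (cases "b = b'")
      case True then show ?thesis using ad S1 v w v1 w1 by auto
    next
      case False
      then have bc: "b = c'" "c = b'" using S1 by auto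
      show ?thesis using ad bc v w v1 w1 by auto
    qed
  qed
  then show ?thesis using hL[of p] hL'[of p] v w by (auto split: if_splits)
qed

lemma comb3_abs:
  fixes L U V W :: "nat \<Rightarrow> bool"
  assumes hL: "\<And>p. V p = (if p=a then L b else if p=b then L a else L p)"
    and hU: "\<And>p. V p = (if p=c then U d else if p=d then U c else U p)"
    and hL': "\<And>p. W p = (if p=a' then L b' else if p=b' then L a' else L p)"
    and hU': "\<And>p. W p = (if p=c' then U d' else if p=d' then U c' else U p)"
    and ne: "L q \<noteq> U q"
    and l: "a < b" "L a" "\<not> L b" "a' < b'" "L a'" "\<not> L b'"
    and l1: "a = a' \<Longrightarrow> b = b'" "b = b' \<Longrightarrow> a = a'" "\<not> (a < a' \<and> a' < b \<and> b < b')" "\<not> (a' < a \<and> a < b' \<and> b' < b)"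
    and u: "c < d" "U c" "\<not> U d" "c' < d'" "U c'" "\<not> U d'"
    and u1: "c = c' \<Longrightarrow> d = d'" "d = d' \<Longrightarrow> c = c'" "\<not> (c < c' \<and> c' < d \<and> d < d')" "\<not> (c' < c \<and> c < d' \<and> d' < d)"
  shows "V p = W p"
proof -
  have dv: "a \<noteq> d" "b \<noteq> c" using hL[of a] hL[of b] hU[of c] hU[of d] l u by auto
  have dw: "a' \<noteq> d'" "b' \<noteq> c'" using hL'[of a'] hL'[of b'] hU'[of c'] hU'[of d'] l u by auto
  have nab: "\<not> (a = c \<and> b = d)"
  proof
    assume "a = c \<and> b = d"
    then have "L x = U x" for x using hL[of x] hU[of x] l u by (auto split: if_splits)
    then show False using ne by simp
  qed
  have nab': "\<not> (a' = c' \<and> b' = d')"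
  proof
    assume "a' = c' \<and> b' = d'"
    then have "L x = U x" for x using hL'[of x] hU'[of x] l u by (auto split: if_splits)
    then show False using ne by simp
  qed
  have Vs: "\<not> V a" "V b" "\<not> V c" "V d" "\<not> W a'" "W b'" "\<not> W c'" "W d'"
    using hL[of a] hL[of b] hU[of c] hU[of d] hL'[of a'] hL'[of b'] hU'[of c'] hU'[of d'] l u by auto
  have T1: "(L x \<and> L x \<noteq> U x) \<longleftrightarrow> ((x = a \<and> a \<noteq> c) \<or> (x = d \<and> d \<noteq> b))" for x
    using hL[of x] hU[of x] l u Vs dv
    by (auto split: if_splits)
  have T2: "(\<not> L x \<and> L x \<noteq> U x) \<longleftrightarrow> ((x = b \<and> b \<noteq> d) \<or> (x = c \<and> c \<noteq> a))" for x
    using hL[of x] hU[of x] l u Vs dv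
    by (auto split: if_splits)
  have T1': "(L x \<and> L x \<noteq> U x) \<longleftrightarrow> ((x = a' \<and> a' \<noteq> c') \<or> (x = d' \<and> d' \<noteq> b'))" for x
    using hL'[of x] hU'[of x] l u Vs dw
    by (auto split: if_splits)
  have T2': "(\<not> L x \<and> L x \<noteq> U x) \<longleftrightarrow> ((x = b' \<and> b' \<noteq> d') \<or> (x = c' \<and> c' \<noteq> a'))" for x
    using hL'[of x] hU'[of x] l u Vs dw
    by (auto split: if_splits)
  have E1: "((x = a \<and> a \<noteq> c) \<or> (x = d \<and> d \<noteq> b)) \<longleftrightarrow> ((x = a' \<and> a' \<noteq> c') \<or> (x = d' \<and> d' \<noteq> b'))" for x
    using T1[of x] T1'[of x] by argo
  have E2: "((x = b \<and> b \<noteq> d) \<or> (x = c \<and> c \<noteq> a)) \<longleftrightarrow> ((x = b' \<and> b' \<noteq> d') \<or> (x = c' \<and> c' \<noteq> a'))" for x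
    using T2[of x] T2'[of x] by argo
  note F = E1[of a] E1[of d] E1[of a'] E1[of d'] E2[of b] E2[of c] E2[of b'] E2[of c']
      l l1 u u1 dv dw nab nab'
  have "a = a' \<and> b = b'"
  proof (cases "a = c")
    case A: True
    then have bd: "b \<noteq> d" using nab by auto
    show ?thesis
    proof (cases "a' = c'")
      case True then show ?thesis using A F by smt
    next
      case False
      show ?thesis
      proof (cases "b' = d'")
        case True
        have d1: "d = a'" using E1[of d] A bd False True dv by auto
        have b1: "b = c'" using E2[of b] A bd False True dv by auto
        show ?thesis
        proof (cases "d < b")
          case True then show ?thesis using l1(3) d1 b1 A l(1) u(1) u(4) \<open>b' = d'\<close> by auto
        next
          case False
          then have "b < d" using bd by auto
          then show ?thesis using u1(3) d1 b1 A \<open>b' = d'\<close> l u by auto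
        qed
      next
        case False2: False then show ?thesis using A bd False F by smt
      qed
    qed
  next
    case A: False
    show ?thesis
    proof (cases "b = d")
      case B: True
      show ?thesis
      proof (cases "a' = c'")
        case C: True
        have bd': "b' \<noteq> d'" using nab' C by auto
        have a1: "a = d'" using E1[of a] A B C bd' dw by auto
        have c1: "c = b'" using E2[of c] A B C bd' dw by auto
        show ?thesis
        proof (cases "a < c")
          case True then show ?thesis using l1(4) a1 c1 B C l u by auto
        next
          case False
          then have "c < a" using A by auto
          then show ?thesis using u1(4) a1 c1 B C l u by auto
        qed
      next
        case False
        show ?thesis
        proof (cases "b' = d'")
          case True then show ?thesis using A B False F by smt
        next
          case False2: False then show ?thesis using A B False F by smt
        qed
      qed
    next
      case B: False
      show ?thesis
      proof (cases "a' = c'")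
        case True then show ?thesis using A B F by smt
      next
        case False
        show ?thesis
        proof (cases "b' = d'")
          case True then show ?thesis using A B False F by smt
        next
          case False2: False
          have a2: "a = a' \<or> a = d'" using E1[of a] A B False False2 by auto
          have d2: "d = a' \<or> d = d'" using E1[of d] A B False False2 by auto
          have b2: "b = b' \<or> b = c'" using E2[of b] A B False False2 by auto
          have c2: "c = b' \<or> c = c'" using E2[of c] A B False False2 by auto
          show ?thesis
          proof (cases "a = a'")
            case True
            then show ?thesis using b2 c2 l1(1) dv dw by auto
          next
            case False
            then have ad: "a = d'" using a2 by auto
            show ?thesis using b2 c2 l1(2) dv dw ad u(4) l(1) by auto
          qed
        qed
      qed
    qed
  qed
  then show ?thesis using hL[of p] hL'[of p] by (auto split: if_splits)
qed


lemma swap_nth_all: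
  assumes "a < length w" "b < length w" "a \<noteq> b"
  shows "swap_at w a b ! p = (if p = a then w ! b else if p = b then w ! a else w ! p)"
  using assms unfolding swap_at_def by (auto simp: nth_list_update)

lemma cup_props:
  assumes "cup w i j"
  shows "i < j" "j < length w" "w ! i" "\<not> w ! j"
  using cup_matched[OF assms] matched_nd[OF cup_matched[OF assms]] unfolding matched_def by auto

lemma cup_inj1: "cup w i j \<Longrightarrow> cup w i j' \<Longrightarrow> j = j'"
  by (rule matched_inj1[OF cup_matched cup_matched])
lemma cup_inj2: "cup w i j \<Longrightarrow> cup w i' j \<Longrightarrow> i = i'"
  by (rule matched_inj2[OF cup_matched cup_matched])
lemma cup_inj1': "cup w a b \<Longrightarrow> cup w c d \<Longrightarrow> a = c \<Longrightarrow> b = d"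
  using cup_inj1[of w a b d] by simp
lemma cup_inj2': "cup w a b \<Longrightarrow> cup w c d \<Longrightarrow> b = d \<Longrightarrow> a = c"
  using cup_inj2[of w a b c] by simp
lemma cup_nocross: "cup w a b \<Longrightarrow> cup w c d \<Longrightarrow> \<not> (a < c \<and> c < b \<and> b < d)"
proof
  assume h: "cup w a b" "cup w c d" "a < c \<and> c < b \<and> b < d"
  show False using matched_nocross[OF cup_matched[OF h(1)] cup_matched[OF h(2)]] h(3) by simp
qed

lemma cup_height: "cup w i j \<Longrightarrow> height w < height (swap_at w i j)"
  by (rule height_swap[OF cup_props(1-4)])

lemma adj_cases:
  assumes "adj x y"
  shows "(\<exists>i j. cup x i j \<and> y = swap_at x i j \<and> height x < height y) \<or>
         (\<exists>i j. cup y i j \<and> x = swap_at y i j \<and> height y < height x)"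
proof -
  have "(\<exists>i j. cup x i j \<and> y = swap_at x i j) \<or> (\<exists>i j. cup y i j \<and> x = swap_at y i j)"
    using assms unfolding adj_def .
  then show ?thesis
  proof
    assume "\<exists>i j. cup x i j \<and> y = swap_at x i j"
    then obtain i j where h: "cup x i j" "y = swap_at x i j" by blast
    then have "height x < height y" using cup_height[OF h(1)] by simp
    then show ?thesis using h by blast
  next
    assume "\<exists>i j. cup y i j \<and> x = swap_at y i j"
    then obtain i j where h: "cup y i j" "x = swap_at y i j" by blast
    then have "height y < height x" using cup_height[OF h(1)] by simp
    then show ?thesis using h by blast
  qed
qed

lemma card_le1: "(\<And>x y. x \<in> S \<Longrightarrow> y \<in> S \<Longrightarrow> x = y) \<Longrightarrow> card S \<le> 1"
proof (cases "S = {}")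
  case False
  assume h: "\<And>x y. x \<in> S \<Longrightarrow> y \<in> S \<Longrightarrow> x = y"
  obtain x where "x \<in> S" using False by blast
  then have "S \<subseteq> {x}" using h by blast
  then have "card S \<le> card {x}" by (rule card_mono[rotated]) simp
  then show ?thesis by simp
qed simp

lemma uniq_below:
  assumes v1: "cup v a b" "l = swap_at v a b" "cup v c d" "u = swap_at v c d"
    and v2: "cup v' a' b'" "l = swap_at v' a' b'" "cup v' c' d'" "u = swap_at v' c' d'"
    and ne: "l \<noteq> u"
  shows "v = v'"
proof -
  note pa = cup_props[OF v1(1)] and pc = cup_props[OF v1(3)]
    and pa' = cup_props[OF v2(1)] and pc' = cup_props[OF v2(3)]
  have len: "length v = length v'" using v1(2) v2(2) swap_length by metis
  have abcd: "(a,b) \<noteq> (c,d)" using ne v1 by auto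
  have abcd': "(a',b') \<noteq> (c',d')" using ne v2 by auto
  show ?thesis
  proof (rule nth_equalityI[OF len])
    fix p assume "p < length v"
    show "v ! p = v' ! p"
    proof (rule comb2_abs[where L = "(!) l" and U = "(!) u" and a=a and b=b and c=c and d=d
          and a'=a' and b'=b' and c'=c' and d'=d'])
      show "\<And>p. l ! p = (if p = a then v ! b else if p = b then v ! a else v ! p)"
        using v1(2) swap_nth_all pa by simp
      show "\<And>p. u ! p = (if p = c then v ! d else if p = d then v ! c else v ! p)"
        using v1(4) swap_nth_all pc by simp
      show "\<And>p. l ! p = (if p = a' then v' ! b' else if p = b' then v' ! a' else v' ! p)"
        using v2(2) swap_nth_all pa' by simp
      show "\<And>p. u ! p = (if p = c' then v' ! d' else if p = d' then v' ! c' else v' ! p)"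
        using v2(4) swap_nth_all pc' by simp
    qed (use pa pc pa' pc' abcd abcd' cup_inj1'[OF v1(1) v1(3)] cup_inj2'[OF v1(1) v1(3)]
          cup_nocross[OF v1(1) v1(3)] cup_nocross[OF v1(3) v1(1)]
          cup_inj1'[OF v2(1) v2(3)] cup_inj2'[OF v2(1) v2(3)]
          cup_nocross[OF v2(1) v2(3)] cup_nocross[OF v2(3) v2(1)] in auto)
  qed
qed

lemma uniq_above:
  assumes v1: "cup l a b" "v = swap_at l a b" "cup u c d" "v = swap_at u c d"
    and v2: "cup l a' b'" "v' = swap_at l a' b'" "cup u c' d'" "v' = swap_at u c' d'"
    and ne: "l \<noteq> u"
  shows "v = v'"
proof -
  note pa = cup_props[OF v1(1)] and pc = cup_props[OF v1(3)]
    and pa' = cup_props[OF v2(1)] and pc' = cup_props[OF v2(3)]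
  have len: "length v = length v'" using v1(2) v2(2) swap_length by metis
  have lenlu: "length l = length u" using v1(2) v1(4) swap_length by metis
  obtain q where q: "l ! q \<noteq> u ! q" using ne lenlu nth_equalityI by blast
  show ?thesis
  proof (rule nth_equalityI[OF len])
    fix p assume "p < length v"
    show "v ! p = v' ! p"
    proof (rule comb3_abs[where L = "(!) l" and U = "(!) u" and a=a and b=b and c=c and d=d
          and a'=a' and b'=b' and c'=c' and d'=d' and q = q])
      show "\<And>p. v ! p = (if p = a then l ! b else if p = b then l ! a else l ! p)"
        using v1(2) swap_nth_all pa by simp
      show "\<And>p. v ! p = (if p = c then u ! d else if p = d then u ! c else u ! p)"
        using v1(4) swap_nth_all pc by simp
      show "\<And>p. v' ! p = (if p = a' then l ! b' else if p = b' then l ! a' else l ! p)"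
        using v2(2) swap_nth_all pa' by simp
      show "\<And>p. v' ! p = (if p = c' then u ! d' else if p = d' then u ! c' else u ! p)"
        using v2(4) swap_nth_all pc' by simp
    qed (use q pa pc pa' pc' cup_inj1'[OF v1(1) v2(1)] cup_inj2'[OF v1(1) v2(1)]
          cup_nocross[OF v1(1) v2(1)] cup_nocross[OF v2(1) v1(1)]
          cup_inj1'[OF v1(3) v2(3)] cup_inj2'[OF v1(3) v2(3)]
          cup_nocross[OF v1(3) v2(3)] cup_nocross[OF v2(3) v1(3)] in auto)
  qed
qed

theorem lemma2p7:
  fixes m n :: nat and l u :: weight
  assumes "m \<ge> 1" and "n \<ge> 1"
    and "l \<in> weights m n" and "u \<in> weights m n" and "l \<noteq> u"
    and "height l \<le> height u"
  shows "\<not> (\<exists>v\<in>weights m n. adj l v \<and> adj v u \<and> (height v = height l \<or> height v = height u))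
    \<and> card {v\<in>weights m n. adj l v \<and> adj v u \<and> height v < height l} \<le> 1
    \<and> card {v\<in>weights m n. adj l v \<and> adj v u \<and> height v > height u} \<le> 1"
proof (intro conjI)
  show "\<not> (\<exists>v\<in>weights m n. adj l v \<and> adj v u \<and> (height v = height l \<or> height v = height u))"
  proof
    assume "\<exists>v\<in>weights m n. adj l v \<and> adj v u \<and> (height v = height l \<or> height v = height u)"
    then obtain v where v: "adj l v" "adj v u" "height v = height l \<or> height v = height u" by blast
    have "height l \<noteq> height v" using adj_cases[OF v(1)] by auto
    moreover have "height v \<noteq> height u" using adj_cases[OF v(2)] by auto
    ultimately show False using v(3) by auto
  qed
  show "card {v\<in>weights m n. adj l v \<and> adj v u \<and> height v < height l} \<le> 1"
  proof (rule card_le1)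
    fix x y assume x: "x \<in> {v\<in>weights m n. adj l v \<and> adj v u \<and> height v < height l}"
      and y: "y \<in> {v\<in>weights m n. adj l v \<and> adj v u \<and> height v < height l}"
    obtain a b where ab: "cup x a b" "l = swap_at x a b"
      using x adj_cases[of l x] by auto
    obtain c d where cd: "cup x c d" "u = swap_at x c d"
      using x adj_cases[of x u] assms(6) by auto
    obtain a' b' where ab': "cup y a' b'" "l = swap_at y a' b'"
      using y adj_cases[of l y] by auto
    obtain c' d' where cd': "cup y c' d'" "u = swap_at y c' d'"
      using y adj_cases[of y u] assms(6) by auto
    show "x = y" by (rule uniq_below[OF ab cd ab' cd' assms(5)])
  qed
  show "card {v\<in>weights m n. adj l v \<and> adj v u \<and> height v > height u} \<le> 1"
  proof (rule card_le1)
    fix x y assume x: "x \<in> {v\<in>weights m n. adj l v \<and> adj v u \<and> height v > height u}"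
      and y: "y \<in> {v\<in>weights m n. adj l v \<and> adj v u \<and> height v > height u}"
    obtain a b where ab: "cup l a b" "x = swap_at l a b"
      using x adj_cases[of l x] assms(6) by auto
    obtain c d where cd: "cup u c d" "x = swap_at u c d"
      using x adj_cases[of x u] by auto
    obtain a' b' where ab': "cup l a' b'" "y = swap_at l a' b'"
      using y adj_cases[of l y] assms(6) by auto
    obtain c' d' where cd': "cup u c' d'" "y = swap_at u c' d'"
      using y adj_cases[of y u] by auto
    show "x = y" by (rule uniq_above[OF ab cd ab' cd' assms(5)])
  qed
qed

end
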